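(* Let $H$ be a binary tree based graph and let ${\bf SAT}(H)$ be the set of satisfying assignments of $\phi_H$. Then $\sum_{S\in{\bf SAT}(H)} (1/2)^{|S\setminus Fix(S)|}=1$.
   Context: Sets of literals never contain a variable together with its negation; $Vars(S)$ is the set of variables occurring in $S$. A rooted tree is extended if none of its leaves has a sibling. A graph $H$ is a binary tree based graph if it is the edge-disjoint union of extended rooted trees $T_1,\dots,T_m$ with roots $t_1,\dots,t_m$ such that every leaf of some $T_i$ is a leaf of exactly two of the trees, and any two trees have at most one common vertex, which is a leaf of both. $T_i,T_j$ are adjacent if they share a leaf $\ell_{i,j}$; $P_{i,j}$ is the path between $t_i$ and $t_j$ in $T_i\cup T_j$. A pseudoedge is a pair $\{t_i,t_j\}$ with $T_i,T_j$ adjacent. $\phi_H$ is the CNF on variables $V(H)$ with a clause $C_{i,j}$ whose literals are the positive literals of $V(P_{i,j})$, for each pseudoedge $\{t_i,t_j\}$. ${\bf SAT}(H)$ is the set of sets $S$ of literals with $Vars(S)=V(H)$ satisfying every clause. For a set $S$ of literals, the positive literal $\ell_{i,j}$ is fixed w.r.t. $S$ if $\ell_{i,j}\in S$ and all other variables of $C_{i,j}$ occur negatively in $S$; $Fix(S)$ is the set of fixed literals. *)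

theory Defs
  imports Complex_Main
begin

definition rooted_tree :: "'v set \<Rightarrow> ('v \<Rightarrow> 'v) \<Rightarrow> 'v \<Rightarrow> bool" where
  "rooted_tree V p r \<longleftrightarrow> finite V \<and> r \<in> V \<and> (\<forall>v \<in> V - {r}. p v \<in> V)
     \<and> (\<forall>v \<in> V. \<exists>k. (p ^^ k) v = r)"

definition tree_edges :: "'v set \<Rightarrow> ('v \<Rightarrow> 'v) \<Rightarrow> 'v \<Rightarrow> 'v set set" where
  "tree_edges V p r = {{v, p v} | v. v \<in> V - {r}}"

definition children :: "'v set \<Rightarrow> ('v \<Rightarrow> 'v) \<Rightarrow> 'v \<Rightarrow> 'v \<Rightarrow> 'v set" where
  "children V p r u = {v \<in> V - {r}. p v = u}"

definition leaves :: "'v set \<Rightarrow> ('v \<Rightarrow> 'v) \<Rightarrow> 'v \<Rightarrow> 'v set" where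
  "leaves V p r = {v \<in> V - {r}. children V p r v = {}}"

definition extended_tree :: "'v set \<Rightarrow> ('v \<Rightarrow> 'v) \<Rightarrow> 'v \<Rightarrow> bool" where
  "extended_tree V p r \<longleftrightarrow> rooted_tree V p r \<and>
     (\<forall>l \<in> leaves V p r. children V p r (p l) = {l})"

text \<open>Vertex set of the path from v up to the root (both included).\<close>
definition to_root :: "('v \<Rightarrow> 'v) \<Rightarrow> 'v \<Rightarrow> 'v \<Rightarrow> 'v set" where
  "to_root p r v = {(p ^^ k) v | k. \<forall>k' < k. (p ^^ k') v \<noteq> r}"

text \<open>Trees T_0, ..., T_(m-1): tree i has vertex set TV i, parent map par i, root rt i.
The graph H is their union.\<close>

definition binary_tree_based ::
  "nat \<Rightarrow> (nat \<Rightarrow> 'v set) \<Rightarrow> (nat \<Rightarrow> 'v \<Rightarrow> 'v) \<Rightarrow> (nat \<Rightarrow> 'v) \<Rightarrow> bool" where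
  "binary_tree_based m TV par rt \<longleftrightarrow>
     (\<forall>i < m. extended_tree (TV i) (par i) (rt i))
   \<and> (\<forall>i < m. \<forall>j < m. i \<noteq> j \<longrightarrow>
        tree_edges (TV i) (par i) (rt i) \<inter> tree_edges (TV j) (par j) (rt j) = {})
   \<and> (\<forall>i < m. \<forall>l \<in> leaves (TV i) (par i) (rt i).
        card {j. j < m \<and> l \<in> leaves (TV j) (par j) (rt j)} = 2)
   \<and> (\<forall>i < m. \<forall>j < m. i \<noteq> j \<longrightarrow>
        card (TV i \<inter> TV j) \<le> 1 \<and>
        TV i \<inter> TV j \<subseteq> leaves (TV i) (par i) (rt i) \<inter> leaves (TV j) (par j) (rt j))"

definition graph_vertices :: "nat \<Rightarrow> (nat \<Rightarrow> 'v set) \<Rightarrow> 'v set" where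
  "graph_vertices m TV = (\<Union>i < m. TV i)"

definition adjacent ::
  "nat \<Rightarrow> (nat \<Rightarrow> 'v set) \<Rightarrow> (nat \<Rightarrow> 'v \<Rightarrow> 'v) \<Rightarrow> (nat \<Rightarrow> 'v) \<Rightarrow> nat \<Rightarrow> nat \<Rightarrow> bool" where
  "adjacent m TV par rt i j \<longleftrightarrow> i < m \<and> j < m \<and> i \<noteq> j \<and>
     leaves (TV i) (par i) (rt i) \<inter> leaves (TV j) (par j) (rt j) \<noteq> {}"

definition shared_leaf ::
  "(nat \<Rightarrow> 'v set) \<Rightarrow> (nat \<Rightarrow> 'v \<Rightarrow> 'v) \<Rightarrow> (nat \<Rightarrow> 'v) \<Rightarrow> nat \<Rightarrow> nat \<Rightarrow> 'v" where
  "shared_leaf TV par rt i j =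
     (THE l. l \<in> leaves (TV i) (par i) (rt i) \<inter> leaves (TV j) (par j) (rt j))"

text \<open>Vertex set of the path P_(i,j) between t_i and t_j in T_i \<union> T_j
 (= variables of clause C_(i,j)).\<close>
definition clause_vars ::
  "(nat \<Rightarrow> 'v set) \<Rightarrow> (nat \<Rightarrow> 'v \<Rightarrow> 'v) \<Rightarrow> (nat \<Rightarrow> 'v) \<Rightarrow> nat \<Rightarrow> nat \<Rightarrow> 'v set" where
  "clause_vars TV par rt i j =
     (let l = shared_leaf TV par rt i j in to_root (par i) (rt i) l \<union> to_root (par j) (rt j) l)"

text \<open>A literal is a pair (x, b): b = True is the positive literal x, b = False its negation.\<close>

definition consistent :: "('v \<times> bool) set \<Rightarrow> bool" where
  "consistent S \<longleftrightarrow> (\<forall>x. \<not> ((x, True) \<in> S \<and> (x, False) \<in> S))"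

definition Vars :: "('v \<times> bool) set \<Rightarrow> 'v set" where
  "Vars S = fst ` S"

definition SAT ::
  "nat \<Rightarrow> (nat \<Rightarrow> 'v set) \<Rightarrow> (nat \<Rightarrow> 'v \<Rightarrow> 'v) \<Rightarrow> (nat \<Rightarrow> 'v) \<Rightarrow> ('v \<times> bool) set set" where
  "SAT m TV par rt = {S. consistent S \<and> Vars S = graph_vertices m TV \<and>
     (\<forall>i j. adjacent m TV par rt i j \<longrightarrow>
        (\<exists>x \<in> clause_vars TV par rt i j. (x, True) \<in> S))}"

definition Fix ::
  "nat \<Rightarrow> (nat \<Rightarrow> 'v set) \<Rightarrow> (nat \<Rightarrow> 'v \<Rightarrow> 'v) \<Rightarrow> (nat \<Rightarrow> 'v) \<Rightarrow> ('v \<times> bool) set \<Rightarrow> ('v \<times> bool) set" where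
  "Fix m TV par rt S = {(l, True) | l. \<exists>i j. adjacent m TV par rt i j \<and>
      l = shared_leaf TV par rt i j \<and> (l, True) \<in> S \<and>
      (\<forall>x \<in> clause_vars TV par rt i j - {l}. (x, False) \<in> S)}"

end

theory Submission imports Defs "HOL-Library.FuncSet" begin

lemma abstract_sum:
  fixes N L :: "'v set" and D :: "'v \<Rightarrow> 'v set"
  assumes fN: "finite N" and fL: "finite L" and disj: "N \<inter> L = {}" and DN: "\<forall>l\<in>L. D l \<subseteq> N"
  shows "(\<Sum>g\<in>{g\<in>PiE (N\<union>L) (\<lambda>_. UNIV). \<forall>l\<in>L. g l \<or> (\<exists>x\<in>D l. g x)}.
           (1/2::real)^card((N\<union>L) - {l\<in>L. g l \<and> (\<forall>x\<in>D l. \<not> g x)})) = 1"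
proof -
  define W where "W b e = (if b then (if e then 1/2 else 1) else (if e then 1/2 else (0::real)))" for b e
  define P where "P g = (\<Prod>l\<in>L. W (g l) (\<exists>x\<in>D l. g x))" for g :: "'v \<Rightarrow> bool"
  have step1: "(if (\<forall>l\<in>L. g l \<or> (\<exists>x\<in>D l. g x)) then (1/2::real)^card((N\<union>L) - {l\<in>L. g l \<and> (\<forall>x\<in>D l. \<not> g x)}) else 0)
     = (1/2)^card N * P g" for g
  proof (cases "\<forall>l\<in>L. g l \<or> (\<exists>x\<in>D l. g x)")
    case True
    let ?F = "{l\<in>L. g l \<and> (\<forall>x\<in>D l. \<not> g x)}"
    have "P g = (\<Prod>l\<in>L. if l \<in> ?F then 1 else 1/2)"
      unfolding P_def using True by (intro prod.cong) (auto simp: W_def)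
    also have "\<dots> = (\<Prod>l\<in>L - ?F. 1/2)"
      using fL by (subst prod.If_cases) (auto simp: Diff_eq)
    also have "\<dots> = (1/2)^card (L - ?F)" by simp
    finally have Pg: "P g = (1/2)^card (L - ?F)" .
    have "(N\<union>L) - ?F = N \<union> (L - ?F)" using disj by auto
    moreover have "card (N \<union> (L - ?F)) = card N + card (L - ?F)"
      using fN fL disj by (intro card_Un_disjoint) auto
    ultimately show ?thesis using True Pg by (simp add: power_add)
  next
    case False
    then obtain l where "l \<in> L" "\<not> g l" "\<not> (\<exists>x\<in>D l. g x)" by auto
    then have "P g = 0" unfolding P_def using fL
      by (intro prod_zero) (auto simp: W_def intro!: bexI[of _ l])
    then show ?thesis using False by simp
  qed
  have fPi: "finite (PiE (N\<union>L) (\<lambda>_. UNIV::bool set))" using fN fL by (intro finite_PiE) auto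
  have "(\<Sum>g\<in>{g\<in>PiE (N\<union>L) (\<lambda>_. UNIV). \<forall>l\<in>L. g l \<or> (\<exists>x\<in>D l. g x)}.
           (1/2::real)^card((N\<union>L) - {l\<in>L. g l \<and> (\<forall>x\<in>D l. \<not> g x)}))
      = (\<Sum>g\<in>PiE (N\<union>L) (\<lambda>_. UNIV). (if (\<forall>l\<in>L. g l \<or> (\<exists>x\<in>D l. g x)) then (1/2::real)^card((N\<union>L) - {l\<in>L. g l \<and> (\<forall>x\<in>D l. \<not> g x)}) else 0))"
    using fPi by (simp add: sum.inter_filter)
  also have "\<dots> = (\<Sum>g\<in>PiE (N\<union>L) (\<lambda>_. UNIV). (1/2)^card N * P g)"
    by (rule sum.cong[OF refl step1])
  also have "\<dots> = (1/2)^card N * (\<Sum>g\<in>PiE (N\<union>L) (\<lambda>_. UNIV). P g)"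
    by (simp add: sum_distrib_left)
  also have "(\<Sum>g\<in>PiE (N\<union>L) (\<lambda>_. UNIV). P g)
      = (\<Sum>(a,b)\<in>PiE N (\<lambda>_. UNIV) \<times> PiE L (\<lambda>_. UNIV). P (\<lambda>x. if x \<in> N then a x else b x))"
  proof (rule sum.reindex_bij_witness[of _ "\<lambda>(a,b). (\<lambda>x. if x \<in> N then a x else b x)"
                                         "\<lambda>g. (restrict g N, restrict g L)"])
    fix g assume g: "g \<in> PiE (N\<union>L) (\<lambda>_. UNIV::bool set)"
    have eq: "(\<lambda>x. if x \<in> N then restrict g N x else restrict g L x) = g"
      using g by (auto simp: PiE_def extensional_def fun_eq_iff)
    show "(case (restrict g N, restrict g L) of (a, b) \<Rightarrow> \<lambda>x. if x \<in> N then a x else b x) = g"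
      using eq by simp
    show "(restrict g N, restrict g L) \<in> PiE N (\<lambda>_. UNIV) \<times> PiE L (\<lambda>_. UNIV)" by auto
    show "(\<lambda>(a,b). P (\<lambda>x. if x \<in> N then a x else b x)) (restrict g N, restrict g L) = P g"
      using eq by simp
  next
    fix ab :: "('v \<Rightarrow> bool) \<times> ('v \<Rightarrow> bool)" assume ab: "ab \<in> PiE N (\<lambda>_. UNIV::bool set) \<times> PiE L (\<lambda>_. UNIV)"
    obtain a b where abd: "ab = (a,b)" by (cases ab)
    show "(case ab of (a, b) \<Rightarrow> \<lambda>x. if x \<in> N then a x else b x) \<in> PiE (N\<union>L) (\<lambda>_. UNIV)"
      using ab abd by (auto simp: PiE_def extensional_def)
    show "(\<lambda>g. (restrict g N, restrict g L)) (case ab of (a, b) \<Rightarrow> \<lambda>x. if x \<in> N then a x else b x) = ab"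
      using ab abd disj by (auto simp: PiE_def extensional_def restrict_def fun_eq_iff)
  qed
  also have "\<dots> = (\<Sum>a\<in>PiE N (\<lambda>_. UNIV). \<Sum>b\<in>PiE L (\<lambda>_. UNIV). P (\<lambda>x. if x \<in> N then a x else b x))"
    by (rule sum.cartesian_product[symmetric])
  also have "\<dots> = (\<Sum>a\<in>PiE N (\<lambda>_. UNIV::bool set). 1)"
  proof (rule sum.cong[OF refl])
    fix a :: "'v \<Rightarrow> bool" assume a: "a \<in> PiE N (\<lambda>_. UNIV)"
    have "(\<Sum>b\<in>PiE L (\<lambda>_. UNIV). P (\<lambda>x. if x \<in> N then a x else b x))
        = (\<Sum>b\<in>PiE L (\<lambda>_. UNIV). \<Prod>l\<in>L. W (b l) (\<exists>x\<in>D l. a x))"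
    proof (rule sum.cong[OF refl])
      fix b assume "b \<in> PiE L (\<lambda>_. UNIV::bool set)"
      show "P (\<lambda>x. if x \<in> N then a x else b x) = (\<Prod>l\<in>L. W (b l) (\<exists>x\<in>D l. a x))"
        unfolding P_def
      proof (rule prod.cong[OF refl])
        fix l assume l: "l \<in> L"
        then have "l \<notin> N" using disj by auto
        moreover have "(\<exists>x\<in>D l. if x \<in> N then a x else b x) = (\<exists>x\<in>D l. a x)"
          using DN l by auto
        ultimately show "W (if l \<in> N then a l else b l) (\<exists>x\<in>D l. if x \<in> N then a x else b x) = W (b l) (\<exists>x\<in>D l. a x)"
          by simp
      qed
    qed
    also have "\<dots> = (\<Prod>l\<in>L. \<Sum>y\<in>UNIV. W y (\<exists>x\<in>D l. a x))"
      using fL by (subst prod_sum_PiE) auto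
    also have "\<dots> = 1" by (intro prod.neutral) (auto simp: W_def UNIV_bool)
    finally show "(\<Sum>b\<in>PiE L (\<lambda>_. UNIV). P (\<lambda>x. if x \<in> N then a x else b x)) = 1" .
  qed
  also have "\<dots> = 2 ^ card N" using fN by (simp add: card_PiE)
  finally show ?thesis by (simp add: power_one_over[symmetric] power_mult_distrib[symmetric])
qed


lemma rt_iter_in:
  assumes "rooted_tree V p r" "v \<in> V"
  shows "(\<forall>k'<k. (p^^k') v \<noteq> r) \<Longrightarrow> (p^^k) v \<in> V"
proof (induction k)
  case 0 then show ?case using assms by simp
next
  case (Suc k)
  then have "(p^^k) v \<in> V" "(p^^k) v \<noteq> r" by auto
  then show ?case using assms(1) by (auto simp: rooted_tree_def)
qed

lemma to_root_sub:
  assumes "rooted_tree V p r" "v \<in> V"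
  shows "to_root p r v \<subseteq> V"
  using rt_iter_in[OF assms] unfolding to_root_def by blast

lemma to_root_self: "v \<in> to_root p r v"
  unfolding to_root_def by (auto intro!: exI[of _ 0])

lemma to_root_parent:
  assumes "rooted_tree V p r" "v \<in> V" "x \<in> to_root p r v" "x \<noteq> v"
  shows "x \<notin> leaves V p r"
proof -
  obtain k where k: "x = (p^^k) v" "\<forall>k'<k. (p^^k') v \<noteq> r" using assms(3) unfolding to_root_def by blast
  then obtain k' where kk: "k = Suc k'" using assms(4) by (cases k) auto
  let ?y = "(p^^k') v"
  have "?y \<in> V" using rt_iter_in[OF assms(1,2), of k'] k kk by auto
  moreover have "?y \<noteq> r" using k kk by auto
  moreover have "p ?y = x" using k kk by simp
  ultimately have "?y \<in> children V p r x" unfolding children_def by auto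
  then show ?thesis unfolding leaves_def by auto
qed


lemma btb_tree:
  assumes B: "binary_tree_based m TV par rt" and i: "i < m"
  shows "rooted_tree (TV i) (par i) (rt i)" "finite (TV i)" "leaves (TV i) (par i) (rt i) \<subseteq> TV i"
  using B i by (auto simp: binary_tree_based_def extended_tree_def rooted_tree_def leaves_def)

lemma btb_inter:
  assumes B: "binary_tree_based m TV par rt" and "i < m" "j < m" "i \<noteq> j"
  shows "card (TV i \<inter> TV j) \<le> 1"
    "TV i \<inter> TV j \<subseteq> leaves (TV i) (par i) (rt i) \<inter> leaves (TV j) (par j) (rt j)"
  using assms unfolding binary_tree_based_def by blast+

lemma btb_card2:
  assumes B: "binary_tree_based m TV par rt" and "i < m" "l \<in> leaves (TV i) (par i) (rt i)"
  shows "card {j. j < m \<and> l \<in> leaves (TV j) (par j) (rt j)} = 2"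
  using assms unfolding binary_tree_based_def by blast

lemma btb_shared:
  assumes B: "binary_tree_based m TV par rt" and a: "adjacent m TV par rt i j"
  shows "leaves (TV i) (par i) (rt i) \<inter> leaves (TV j) (par j) (rt j) = {shared_leaf TV par rt i j}"
proof -
  have ij: "i < m" "j < m" "i \<noteq> j" using a by (auto simp: adjacent_def)
  obtain l where l: "l \<in> leaves (TV i) (par i) (rt i) \<inter> leaves (TV j) (par j) (rt j)"
    using a by (auto simp: adjacent_def)
  have c: "card (TV i \<inter> TV j) \<le> 1" using btb_inter[OF B ij] by simp
  have f: "finite (TV i \<inter> TV j)" using btb_tree[OF B ij(1)] by auto
  have sub: "leaves (TV i) (par i) (rt i) \<inter> leaves (TV j) (par j) (rt j) \<subseteq> TV i \<inter> TV j"
    using btb_tree(3)[OF B ij(1)] btb_tree(3)[OF B ij(2)] by blast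
  have "card (TV i \<inter> TV j) \<le> Suc 0" using c by simp
  with f have all: "\<forall>a\<in>TV i \<inter> TV j. \<forall>b\<in>TV i \<inter> TV j. a = b" using card_le_Suc0_iff_eq by blast
  have uniq: "\<And>l'. l' \<in> leaves (TV i) (par i) (rt i) \<inter> leaves (TV j) (par j) (rt j) \<Longrightarrow> l' = l"
  proof -
    fix l' assume "l' \<in> leaves (TV i) (par i) (rt i) \<inter> leaves (TV j) (par j) (rt j)"
    then have "l' \<in> TV i \<inter> TV j" "l \<in> TV i \<inter> TV j" using sub l by blast+
    then show "l' = l" using all by blast
  qed
  have "shared_leaf TV par rt i j = l"
    unfolding shared_leaf_def using l uniq by (rule the_equality)
  then show ?thesis using l uniq by blast
qed

lemma btb_K:
  assumes B: "binary_tree_based m TV par rt" and a: "adjacent m TV par rt i j"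
  shows "{k. k < m \<and> shared_leaf TV par rt i j \<in> leaves (TV k) (par k) (rt k)} = {i, j}"
proof -
  let ?l = "shared_leaf TV par rt i j"
  have ij: "i < m" "j < m" "i \<noteq> j" using a by (auto simp: adjacent_def)
  have li: "?l \<in> leaves (TV i) (par i) (rt i)" "?l \<in> leaves (TV j) (par j) (rt j)"
    using btb_shared[OF B a] by auto
  have c: "card {k. k < m \<and> ?l \<in> leaves (TV k) (par k) (rt k)} = 2"
    using btb_card2[OF B ij(1) li(1)] .
  have "{i, j} \<subseteq> {k. k < m \<and> ?l \<in> leaves (TV k) (par k) (rt k)}" using ij li by auto
  moreover have "card {i, j} = 2" using ij by auto
  moreover have "finite {k. k < m \<and> ?l \<in> leaves (TV k) (par k) (rt k)}" by auto
  ultimately have "{i, j} = {k. k < m \<and> ?l \<in> leaves (TV k) (par k) (rt k)}"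
    using c by (intro card_subset_eq) auto
  then show ?thesis by simp
qed

lemma clause_sym: "clause_vars TV par rt j i = clause_vars TV par rt i j"
  unfolding clause_vars_def shared_leaf_def by (simp add: Int_commute Un_commute Let_def)

lemma adjacent_sym: "adjacent m TV par rt j i = adjacent m TV par rt i j"
  unfolding adjacent_def by auto

lemma btb_clause_eq:
  assumes B: "binary_tree_based m TV par rt" and a: "adjacent m TV par rt i j"
    and a': "adjacent m TV par rt i' j'" and e: "shared_leaf TV par rt i' j' = shared_leaf TV par rt i j"
  shows "clause_vars TV par rt i' j' = clause_vars TV par rt i j"
proof -
  have "{i', j'} = {i, j}" using btb_K[OF B a] btb_K[OF B a'] e by simp
  moreover have "i' \<noteq> j'" using a' by (auto simp: adjacent_def)
  ultimately have "(i' = i \<and> j' = j) \<or> (i' = j \<and> j' = i)" by (auto simp: doubleton_eq_iff)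
  then show ?thesis
  proof (elim disjE)
    assume "i' = i \<and> j' = j" then show ?thesis by simp
  next
    assume "i' = j \<and> j' = i" then show ?thesis using clause_sym[of TV par rt i j] by simp
  qed
qed

lemma btb_leaf_pair:
  assumes B: "binary_tree_based m TV par rt" and i: "i < m" and l: "l \<in> leaves (TV i) (par i) (rt i)"
  shows "\<exists>j. adjacent m TV par rt i j \<and> shared_leaf TV par rt i j = l"
proof -
  let ?K = "{k. k < m \<and> l \<in> leaves (TV k) (par k) (rt k)}"
  have c: "card ?K = 2" using btb_card2[OF B i l] .
  have "\<exists>j\<in>?K. j \<noteq> i"
  proof (rule ccontr)
    assume "\<not> ?thesis"
    then have "?K \<subseteq> {i}" by auto
    then have "card ?K \<le> card {i}" by (intro card_mono) auto
    then have "card ?K \<le> 1" by simp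
    then show False using c by simp
  qed
  then obtain j where j: "j < m" "l \<in> leaves (TV j) (par j) (rt j)" "j \<noteq> i" by auto
  then have a: "adjacent m TV par rt i j" using i l by (auto simp: adjacent_def)
  have "l \<in> leaves (TV i) (par i) (rt i) \<inter> leaves (TV j) (par j) (rt j)" using l j(2) by blast
  then have "l \<in> {shared_leaf TV par rt i j}" unfolding btb_shared[OF B a] .
  then have "shared_leaf TV par rt i j = l" by simp
  then show ?thesis using a by auto
qed

lemma btb_clause_props:
  assumes B: "binary_tree_based m TV par rt" and a: "adjacent m TV par rt i j"
  shows "shared_leaf TV par rt i j \<in> clause_vars TV par rt i j"
    "clause_vars TV par rt i j \<subseteq> graph_vertices m TV"
    "clause_vars TV par rt i j - {shared_leaf TV par rt i j} \<subseteq> graph_vertices m TV - (\<Union>k<m. leaves (TV k) (par k) (rt k))"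
proof -
  let ?l = "shared_leaf TV par rt i j"
  have ij: "i < m" "j < m" "i \<noteq> j" using a by (auto simp: adjacent_def)
  have li: "?l \<in> leaves (TV i) (par i) (rt i)" "?l \<in> leaves (TV j) (par j) (rt j)"
    using btb_shared[OF B a] by auto
  have lv: "?l \<in> TV i" "?l \<in> TV j" using li btb_tree[OF B ij(1)] btb_tree[OF B ij(2)] by auto
  show "?l \<in> clause_vars TV par rt i j" unfolding clause_vars_def Let_def using to_root_self by auto
  have s1: "to_root (par i) (rt i) ?l \<subseteq> TV i" by (rule to_root_sub[OF btb_tree(1)[OF B ij(1)] lv(1)])
  have s2: "to_root (par j) (rt j) ?l \<subseteq> TV j" by (rule to_root_sub[OF btb_tree(1)[OF B ij(2)] lv(2)])
  show "clause_vars TV par rt i j \<subseteq> graph_vertices m TV"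
    unfolding clause_vars_def Let_def graph_vertices_def using s1 s2 ij by blast
  have key: "x \<notin> (\<Union>k<m. leaves (TV k) (par k) (rt k))"
    if i: "i < m" and lv: "?l \<in> TV i" and x: "x \<in> to_root (par i) (rt i) ?l" "x \<noteq> ?l" for i x
  proof
    have xl: "x \<notin> leaves (TV i) (par i) (rt i)"
      by (rule to_root_parent[OF btb_tree(1)[OF B i] lv x])
    have xv: "x \<in> TV i" using to_root_sub[OF btb_tree(1)[OF B i] lv] x by auto
    assume "x \<in> (\<Union>k<m. leaves (TV k) (par k) (rt k))"
    then obtain k where k: "k < m" "x \<in> leaves (TV k) (par k) (rt k)" by auto
    show False
    proof (cases "k = i")
      case True then show False using xl k by simp
    next
      case False
      have "x \<in> TV k" using k btb_tree[OF B k(1)] by auto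
      then have "x \<in> leaves (TV i) (par i) (rt i)"
        using btb_inter(2)[OF B i k(1) False[symmetric]] xv by blast
      then show False using xl by simp
    qed
  qed
  show "clause_vars TV par rt i j - {?l} \<subseteq> graph_vertices m TV - (\<Union>k<m. leaves (TV k) (par k) (rt k))"
  proof
    fix x assume x: "x \<in> clause_vars TV par rt i j - {?l}"
    then have "x \<in> graph_vertices m TV" using \<open>clause_vars TV par rt i j \<subseteq> graph_vertices m TV\<close> by auto
    moreover have "x \<notin> (\<Union>k<m. leaves (TV k) (par k) (rt k))"
      using x key[OF ij(1) lv(1)] key[OF ij(2) lv(2)] unfolding clause_vars_def Let_def by auto
    ultimately show "x \<in> graph_vertices m TV - (\<Union>k<m. leaves (TV k) (par k) (rt k))" by auto
  qed
qed


theorem proposition1: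
  fixes m :: nat and TV :: "nat \<Rightarrow> 'v set" and par :: "nat \<Rightarrow> 'v \<Rightarrow> 'v" and rt :: "nat \<Rightarrow> 'v"
  assumes "binary_tree_based m TV par rt"
  shows "(\<Sum>S \<in> SAT m TV par rt. (1/2 :: real) ^ card (S - Fix m TV par rt S)) = 1"
proof -
  note B = assms
  define V where "V = graph_vertices m TV"
  define L where "L = (\<Union>k<m. leaves (TV k) (par k) (rt k))"
  define N where "N = V - L"
  define PR where "PR l = {(i,j). adjacent m TV par rt i j \<and> shared_leaf TV par rt i j = l}" for l
  define D where "D l = (\<Union>(i,j)\<in>PR l. clause_vars TV par rt i j) - {l}" for l
  have LV: "L \<subseteq> V" unfolding L_def V_def graph_vertices_def using btb_tree(3)[OF B] by blast
  have fV: "finite V" unfolding V_def graph_vertices_def using btb_tree(2)[OF B] by blast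
  have VNL: "V = N \<union> L" using LV unfolding N_def by blast
  have DD: "D (shared_leaf TV par rt i j) = clause_vars TV par rt i j - {shared_leaf TV par rt i j}"
    if a: "adjacent m TV par rt i j" for i j
  proof -
    have "(\<Union>(i',j')\<in>PR (shared_leaf TV par rt i j). clause_vars TV par rt i' j') = clause_vars TV par rt i j"
    proof
      show "(\<Union>(i',j')\<in>PR (shared_leaf TV par rt i j). clause_vars TV par rt i' j') \<subseteq> clause_vars TV par rt i j"
        using btb_clause_eq[OF B a] unfolding PR_def by auto
      show "clause_vars TV par rt i j \<subseteq> (\<Union>(i',j')\<in>PR (shared_leaf TV par rt i j). clause_vars TV par rt i' j')"
        using a unfolding PR_def by blast
    qed
    then show ?thesis unfolding D_def by simp
  qed
  have sharedL: "shared_leaf TV par rt i j \<in> L" if a: "adjacent m TV par rt i j" for i j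
    using btb_shared[OF B a] a unfolding L_def adjacent_def by blast
  have Lpair: "\<exists>i j. adjacent m TV par rt i j \<and> shared_leaf TV par rt i j = l" if "l \<in> L" for l
    using that btb_leaf_pair[OF B] unfolding L_def by blast
  have DN: "\<forall>l\<in>L. D l \<subseteq> N"
  proof
    fix l assume "l \<in> L"
    then obtain i j where a: "adjacent m TV par rt i j" and e: "shared_leaf TV par rt i j = l"
      using Lpair by blast
    show "D l \<subseteq> N" using DD[OF a] btb_clause_props(3)[OF B a] e unfolding N_def V_def L_def by simp
  qed
  have DV: "D l \<subseteq> V" if "l \<in> L" for l using DN that unfolding N_def by blast
  define F where "F g = (\<lambda>x. (x, g x)) ` V" for g :: "'v \<Rightarrow> bool"
  define G where "G = {g\<in>PiE (N\<union>L) (\<lambda>_. UNIV). \<forall>l\<in>L. g l \<or> (\<exists>x\<in>D l. g x)}"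
  define Fx where "Fx g = {l\<in>L. g l \<and> (\<forall>x\<in>D l. \<not> g x)}" for g :: "'v \<Rightarrow> bool"
  have SATeq: "SAT m TV par rt = F ` G"
  proof
    show "SAT m TV par rt \<subseteq> F ` G"
    proof
      fix S assume S: "S \<in> SAT m TV par rt"
      then have cons: "consistent S" and vars: "Vars S = V"
        and cl: "\<And>i j. adjacent m TV par rt i j \<Longrightarrow> \<exists>x \<in> clause_vars TV par rt i j. (x, True) \<in> S"
        unfolding SAT_def V_def by auto
      define g where "g = restrict (\<lambda>x. (x, True) \<in> S) V"
      have mem: "(x, b) \<in> S \<longleftrightarrow> x \<in> V \<and> g x = b" for x b
      proof
        assume xb: "(x, b) \<in> S"
        then have "x \<in> V" using vars unfolding Vars_def by force
        moreover have "g x = b" using xb cons \<open>x \<in> V\<close> unfolding g_def consistent_def by (cases b) auto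
        ultimately show "x \<in> V \<and> g x = b" by simp
      next
        assume xb: "x \<in> V \<and> g x = b"
        then obtain b' where "(x, b') \<in> S" using vars unfolding Vars_def by force
        moreover have "g x = b'" using \<open>(x, b') \<in> S\<close> cons xb unfolding g_def consistent_def by (cases b') auto
        ultimately show "(x, b) \<in> S" using xb by simp
      qed
      have "S = F g" unfolding F_def using mem by auto
      moreover have "g \<in> G"
      proof -
        have "g \<in> PiE (N\<union>L) (\<lambda>_. UNIV)" unfolding g_def using VNL by auto
        moreover have "g l \<or> (\<exists>x\<in>D l. g x)" if l: "l \<in> L" for l
        proof -
          obtain i j where a: "adjacent m TV par rt i j" and e: "shared_leaf TV par rt i j = l"
            using Lpair[OF l] by blast
          obtain x where x: "x \<in> clause_vars TV par rt i j" "(x, True) \<in> S" using cl[OF a] by blast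
          show ?thesis
          proof (cases "x = l")
            case True then show ?thesis using x mem by auto
          next
            case False
            then have "x \<in> D l" using DD[OF a] e x by simp
            then show ?thesis using x mem by auto
          qed
        qed
        ultimately show ?thesis unfolding G_def by blast
      qed
      ultimately show "S \<in> F ` G" by blast
    qed
  next
    show "F ` G \<subseteq> SAT m TV par rt"
    proof
      fix S assume "S \<in> F ` G"
      then obtain g where g: "g \<in> G" and Sg: "S = F g" by blast
      have "consistent S" unfolding Sg F_def consistent_def by auto
      moreover have "Vars S = graph_vertices m TV" unfolding Sg F_def Vars_def V_def by force
      moreover have "\<exists>x \<in> clause_vars TV par rt i j. (x, True) \<in> S" if a: "adjacent m TV par rt i j" for i j
      proof -
        let ?l = "shared_leaf TV par rt i j"
        have lL: "?l \<in> L" by (rule sharedL[OF a])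
        then have "g ?l \<or> (\<exists>x\<in>D ?l. g x)" using g unfolding G_def by blast
        then show ?thesis
        proof
          assume "g ?l"
          then show ?thesis using btb_clause_props(1)[OF B a] LV lL unfolding Sg F_def by force
        next
          assume "\<exists>x\<in>D ?l. g x"
          then obtain x where "x \<in> D ?l" "g x" by blast
          then show ?thesis using DD[OF a] DV[OF lL] unfolding Sg F_def by force
        qed
      qed
      ultimately show "S \<in> SAT m TV par rt" unfolding SAT_def by blast
    qed
  qed
  have injF: "inj_on F G"
  proof
    fix g g' assume g: "g \<in> G" and g': "g' \<in> G" and e: "F g = F g'"
    show "g = g'"
    proof
      fix x show "g x = g' x"
      proof (cases "x \<in> V")
        case True
        then have "(x, g x) \<in> F g'" using e unfolding F_def by blast
        then show ?thesis unfolding F_def by auto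
      next
        case False
        then show ?thesis using g g' VNL unfolding G_def PiE_def extensional_def by auto
      qed
    qed
  qed
  have cardeq: "card (F g - Fix m TV par rt (F g)) = card (V - Fx g)" if g: "g \<in> G" for g
  proof -
    have Fix: "Fix m TV par rt (F g) = (\<lambda>l. (l, True)) ` Fx g"
    proof
      show "Fix m TV par rt (F g) \<subseteq> (\<lambda>l. (l, True)) ` Fx g"
      proof
        fix z assume "z \<in> Fix m TV par rt (F g)"
        then obtain l i j where z: "z = (l, True)" and a: "adjacent m TV par rt i j"
          and e: "l = shared_leaf TV par rt i j" and lt: "(l, True) \<in> F g"
          and oth: "\<forall>x \<in> clause_vars TV par rt i j - {l}. (x, False) \<in> F g"
          unfolding Fix_def by blast
        have "l \<in> L" using sharedL[OF a] e by simp
        moreover have "g l" using lt unfolding F_def by auto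
        moreover have "\<not> g x" if "x \<in> D l" for x
          using that oth DD[OF a] e unfolding F_def by auto
        ultimately show "z \<in> (\<lambda>l. (l, True)) ` Fx g" unfolding z Fx_def by blast
      qed
      show "(\<lambda>l. (l, True)) ` Fx g \<subseteq> Fix m TV par rt (F g)"
      proof
        fix z assume "z \<in> (\<lambda>l. (l, True)) ` Fx g"
        then obtain l where z: "z = (l, True)" and lL: "l \<in> L" and gl: "g l" and nd: "\<forall>x\<in>D l. \<not> g x"
          unfolding Fx_def by blast
        obtain i j where a: "adjacent m TV par rt i j" and e: "shared_leaf TV par rt i j = l"
          using Lpair[OF lL] by blast
        have "(l, True) \<in> F g" using gl lL LV unfolding F_def by force
        moreover have "(x, False) \<in> F g" if "x \<in> clause_vars TV par rt i j - {l}" for x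
        proof -
          have "x \<in> D l" using that DD[OF a] e by simp
          then show ?thesis using nd DV[OF lL] unfolding F_def by force
        qed
        ultimately show "z \<in> Fix m TV par rt (F g)" unfolding Fix_def z using a e by blast
      qed
    qed
    have "F g - Fix m TV par rt (F g) = F g - (\<lambda>l. (l, True)) ` Fx g"
      by (simp only: Fix)
    also have "\<dots> = (\<lambda>x. (x, g x)) ` (V - Fx g)"
    proof
      have gF: "g x" if "x \<in> Fx g" for x using that unfolding Fx_def by blast
      show "F g - (\<lambda>l. (l, True)) ` Fx g \<subseteq> (\<lambda>x. (x, g x)) ` (V - Fx g)"
      proof
        fix z assume z: "z \<in> F g - (\<lambda>l. (l, True)) ` Fx g"
        then obtain x where x: "z = (x, g x)" "x \<in> V" unfolding F_def by blast
        have "x \<notin> Fx g"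
        proof
          assume "x \<in> Fx g"
          then have "z \<in> (\<lambda>l. (l, True)) ` Fx g" using gF x(1) by simp
          then show False using z by blast
        qed
        then show "z \<in> (\<lambda>x. (x, g x)) ` (V - Fx g)" using x by blast
      qed
      show "(\<lambda>x. (x, g x)) ` (V - Fx g) \<subseteq> F g - (\<lambda>l. (l, True)) ` Fx g"
      proof
        fix z assume "z \<in> (\<lambda>x. (x, g x)) ` (V - Fx g)"
        then obtain x where x: "z = (x, g x)" "x \<in> V" "x \<notin> Fx g" by blast
        have "z \<in> F g" unfolding F_def using x by blast
        moreover have "z \<notin> (\<lambda>l. (l, True)) ` Fx g"
        proof
          assume "z \<in> (\<lambda>l. (l, True)) ` Fx g"
          then obtain l where "l \<in> Fx g" "z = (l, True)" by blast
          then show False using x by simp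
        qed
        ultimately show "z \<in> F g - (\<lambda>l. (l, True)) ` Fx g" by blast
      qed
    qed
    finally have "F g - Fix m TV par rt (F g) = (\<lambda>x. (x, g x)) ` (V - Fx g)" .
    moreover have "inj_on (\<lambda>x. (x, g x)) (V - Fx g)" by (auto intro: inj_onI)
    ultimately show ?thesis by (simp add: card_image)
  qed
  have "(\<Sum>S \<in> SAT m TV par rt. (1/2 :: real) ^ card (S - Fix m TV par rt S))
      = (\<Sum>g\<in>G. (1/2 :: real) ^ card (F g - Fix m TV par rt (F g)))"
    unfolding SATeq by (rule sum.reindex[OF injF, unfolded comp_def])
  also have "\<dots> = (\<Sum>g\<in>G. (1/2 :: real) ^ card ((N \<union> L) - Fx g))"
    using cardeq VNL by (intro sum.cong) auto
  also have "\<dots> = 1" unfolding G_def Fx_def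
  proof (rule abstract_sum)
    show "finite N" using fV unfolding N_def by simp
    show "finite L" using fV LV by (rule finite_subset[rotated])
    show "N \<inter> L = {}" unfolding N_def by blast
    show "\<forall>l\<in>L. D l \<subseteq> N" by (rule DN)
  qed
  finally show ?thesis .
qed

end
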